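(* Let $m\geq1$, let $T$ be a $B$-tree of order $2m+1$ with $n$ keys and height at least $1$, let $n_1$ be the number of keys of $T$ not stored in leaves, and let $\pi\in S_n$ be a permutation which, used as key sequence, produces a history $(T_1,\dots,T_n=T)$. Let $i_1<\dots<i_{n_1}$ be the times $i$ at which inserting $\pi(i)$ causes the leaf receiving it to split, and let $K_{i_j}$ be the median key of that leaf (the key moved from the leaf into its parent at time $i_j$). Let $\pi^{(1)}\in S_{n_1}$ be the permutation order-isomorphic to $(K_{i_1},\dots,K_{i_{n_1}})$. Then $(T^{(1)}_{i_1},\dots,T^{(1)}_{i_{n_1}})$ is a history of $T^{(1)}$, and it is exactly the history produced by inserting the keys $\pi^{(1)}(1),\dots,\pi^{(1)}(n_1)$ successively; in particular $\pi^{(1)}$ produces the tree $T^{(1)}$.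
   Context: A $B$-tree of order $2m+1$ is a rooted plane search tree whose nodes contain pairwise distinct keys in increasing left-to-right order (a non-leaf node with $k$ keys has $k+1$ children, the $i$-th child's subtree containing keys between the $(i-1)$-th and $i$-th key), every non-root node has between $m$ and $2m$ keys, the root between $1$ and $2m$, and all leaves have equal depth. Insertion: place the new key in the appropriate leaf; whenever a node has $2m+1$ keys, split it, moving the median key up into the parent and forming two nodes from the $m$ smallest and the $m$ largest keys (creating a new one-key root if the root splits). A permutation $\pi\in S_n$ used as key sequence means inserting $\pi(1),\dots,\pi(n)$ successively starting from the empty tree; it produces the history $(T_1,\dots,T_n)$ where $T_i$ is the tree after $i$ insertions, trees being considered up to isomorphism of rooted plane trees (shape and number of keys per node). A history of a tree $T$ with $N$ keys is a sequence $(T_1,\dots,T_N=T)$ of $B$-trees with $T_1$ having one key and each $T_i$ obtained from $T_{i-1}$ by one insertion. For a $B$-tree $S$, $S^{(1)}$ denotes the tree obtained by deleting all leaves of $S$. *)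

theory Defs
  imports Main "HOL-Combinatorics.Permutations"
begin

datatype 'a btree = Node (bkeys: "'a list") (kids: "'a btree list")

text \<open>Shape of a tree: forget the keys (rooted plane tree with number of keys per node).\<close>
definition shape :: "'a btree \<Rightarrow> unit btree" where
  "shape t = map_btree (\<lambda>_. ()) t"

fun keyset :: "'a btree \<Rightarrow> 'a set" where
  "keyset (Node ks ts) = set ks \<union> \<Union> (set (map keyset ts))"

fun nkeys :: "'a btree \<Rightarrow> nat" where
  "nkeys (Node ks ts) = length ks + sum_list (map nkeys ts)"

fun inner_keys :: "'a btree \<Rightarrow> nat" where
  "inner_keys (Node ks ts) = (if ts = [] then 0 else length ks + sum_list (map inner_keys ts))"

fun height :: "'a btree \<Rightarrow> nat" where
  "height (Node ks ts) = (if ts = [] then 0 else Suc (Max (set (map height ts))))"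

fun balanced :: "'a btree \<Rightarrow> nat \<Rightarrow> bool" where
  "balanced (Node ks ts) d = (if ts = [] then d = 0 else d > 0 \<and> list_all (\<lambda>t. balanced t (d - 1)) ts)"

fun search_ok :: "nat \<Rightarrow> ('a::linorder) btree \<Rightarrow> bool" where
  "search_ok m (Node ks ts) =
     (sorted_wrt (<) ks \<and> (ts = [] \<or> length ts = length ks + 1) \<and>
      (\<forall>i < length ts. \<forall>k \<in> keyset (ts ! i).
          (0 < i \<longrightarrow> ks ! (i - 1) < k) \<and> (i < length ks \<longrightarrow> k < ks ! i)) \<and>
      list_all (\<lambda>t. m \<le> length (bkeys t) \<and> length (bkeys t) \<le> 2 * m \<and> search_ok m t) ts)"

definition is_btree :: "nat \<Rightarrow> ('a::linorder) btree \<Rightarrow> bool" where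
  "is_btree m t \<longleftrightarrow> 1 \<le> length (bkeys t) \<and> length (bkeys t) \<le> 2 * m \<and> search_ok m t
      \<and> balanced t (height t)"

datatype 'a up = Ok "'a btree" | Split "'a btree" 'a "'a btree"

definition split_node :: "nat \<Rightarrow> 'a list \<Rightarrow> 'a btree list \<Rightarrow> 'a up" where
  "split_node m ks ts =
     (if length ks = 2 * m + 1
      then Split (Node (take m ks) (take (m + 1) ts)) (ks ! m) (Node (drop (m + 1) ks) (drop (m + 1) ts))
      else Ok (Node ks ts))"

fun ins :: "nat \<Rightarrow> ('a::linorder) \<Rightarrow> 'a btree \<Rightarrow> 'a up" where
  "ins m x (Node ks ts) =
     (let i = length (filter (\<lambda>k. k < x) ks) in
      if ts = [] then split_node m (insort x ks) []
      else if i < length ts then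
        (case map (ins m x) ts ! i of
           Ok t' \<Rightarrow> Ok (Node ks (ts[i := t']))
         | Split l k r \<Rightarrow>
             split_node m (take i ks @ [k] @ drop i ks) (take i ts @ [l, r] @ drop (Suc i) ts))
      else Ok (Node ks ts))"

definition binsert :: "nat \<Rightarrow> ('a::linorder) \<Rightarrow> 'a btree \<Rightarrow> 'a btree" where
  "binsert m x t = (case ins m x t of Ok t' \<Rightarrow> t' | Split l k r \<Rightarrow> Node [k] [l, r])"

text \<open>Tree obtained by inserting the (nonempty) key sequence xs into the empty tree.\<close>
definition build :: "nat \<Rightarrow> ('a::linorder) list \<Rightarrow> 'a btree" where
  "build m xs = foldl (\<lambda>t x. binsert m x t) (Node [hd xs] []) (tl xs)"

definition bt_after :: "nat \<Rightarrow> (nat \<Rightarrow> nat) \<Rightarrow> nat \<Rightarrow> nat btree" where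
  "bt_after m \<pi> i = build m (map \<pi> [1..<i + 1])"

fun leaf_median :: "nat \<Rightarrow> ('a::linorder) \<Rightarrow> 'a btree \<Rightarrow> 'a option" where
  "leaf_median m x (Node ks ts) =
     (let i = length (filter (\<lambda>k. k < x) ks) in
      if ts = [] then (if length ks = 2 * m then Some (insort x ks ! m) else None)
      else if i < length ts then map (leaf_median m x) ts ! i
      else None)"

text \<open>S^(1): delete all leaves (for trees of height at least 1 with all leaves at equal depth).\<close>
fun del_leaves :: "'a btree \<Rightarrow> 'a btree" where
  "del_leaves (Node ks ts) =
     (if list_all (\<lambda>t. kids t = []) ts then Node ks [] else Node ks (map del_leaves ts))"

definition one_insertion :: "nat \<Rightarrow> unit btree \<Rightarrow> unit btree \<Rightarrow> bool" where
  "one_insertion m A B \<longleftrightarrow>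
     (\<exists>(S :: nat btree) x. is_btree m S \<and> x \<notin> keyset S \<and> shape S = A \<and> shape (binsert m x S) = B)"

definition is_history :: "nat \<Rightarrow> unit btree list \<Rightarrow> unit btree \<Rightarrow> bool" where
  "is_history m Ts T \<longleftrightarrow>
     length Ts = nkeys T \<and> Ts \<noteq> [] \<and> last Ts = T \<and>
     (\<forall>A \<in> set Ts. \<exists>(S :: nat btree). is_btree m S \<and> shape S = A) \<and>
     nkeys (hd Ts) = 1 \<and>
     (\<forall>i. Suc i < length Ts \<longrightarrow> one_insertion m (Ts ! i) (Ts ! Suc i))"

text \<open>Permutation (as list of values) order-isomorphic to a list of distinct keys.\<close>
definition std_perm :: "('a::linorder) list \<Rightarrow> nat list" where
  "std_perm ks = map (\<lambda>k. card {k' \<in> set ks. k' \<le> k}) ks"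

end

theory Submission
  imports Defs
begin



fun sf :: "'a list list \<Rightarrow> 'a list \<Rightarrow> 'a list" where
  "sf (c # cs) (k # ks) = k # c @ sf cs ks"
| "sf _ _ = []"

fun il :: "'a list list \<Rightarrow> 'a list \<Rightarrow> 'a list" where
  "il (c # cs) ks = c @ sf cs ks"
| "il [] ks = ks"

fun inorder :: "'a btree \<Rightarrow> 'a list" where
  "inorder (Node ks ts) = (if ts = [] then ks else il (map inorder ts) ks)"

definition apre :: "'a list list \<Rightarrow> 'a list \<Rightarrow> 'a list" where
  "apre P KP = (case P of [] \<Rightarrow> [] | p # ps \<Rightarrow> p @ sf ps (butlast KP) @ [last KP])"

lemma sf_append: "length as = length ks1 \<Longrightarrow> sf (as @ bs) (ks1 @ ks2) = sf as ks1 @ sf bs ks2"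
  by (induction as ks1 rule: sf.induct) auto

lemma il_decomp:
  assumes "length P = length KP"
  shows "il (P @ c # Q) (KP @ KQ) = apre P KP @ c @ sf Q KQ"
proof (cases P)
  case Nil then show ?thesis using assms by (simp add: apre_def)
next
  case (Cons p ps)
  then have "KP \<noteq> []" using assms by auto
  then have KP: "KP = butlast KP @ [last KP]" by simp
  have "il (P @ c # Q) (KP @ KQ) = p @ sf (ps @ c # Q) (butlast KP @ last KP # KQ)"
    using Cons KP by (metis append.assoc append_Cons append_Nil il.simps(1))
  also have "\<dots> = p @ sf ps (butlast KP) @ sf (c # Q) (last KP # KQ)"
    using assms Cons by (simp add: sf_append)
  finally show ?thesis using Cons by (simp add: apre_def)
qed

lemma set_sf: "length cs = length ks \<Longrightarrow> set (sf cs ks) = \<Union> (set (map set cs)) \<union> set ks"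
  by (induction cs ks rule: sf.induct) auto

lemma length_sf: "length cs = length ks \<Longrightarrow> length (sf cs ks) = sum_list (map length cs) + length ks"
  by (induction cs ks rule: sf.induct) auto

lemma set_il: "length cs = Suc (length ks) \<Longrightarrow> set (il cs ks) = \<Union> (set (map set cs)) \<union> set ks"
  by (cases cs) (auto simp: set_sf)

lemma length_il: "length cs = Suc (length ks) \<Longrightarrow> length (il cs ks) = sum_list (map length cs) + length ks"
  by (cases cs) (auto simp: length_sf)

lemma set_apre: assumes "length P = length KP" shows "set (apre P KP) = \<Union> (set (map set P)) \<union> set KP"
proof (cases P)
  case Nil then show ?thesis using assms by (simp add: apre_def)
next
  case (Cons p ps)
  then have ne: "KP \<noteq> []" using assms by auto
  have "set KP = set (butlast KP @ [last KP])"
    using ne by simp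
  then have KP: "set KP = set (butlast KP) \<union> {last KP}" by simp
  have l: "length ps = length (butlast KP)" using Cons assms by simp
  have "set (apre P KP) = set p \<union> set (sf ps (butlast KP)) \<union> {last KP}"
    unfolding apre_def Cons by auto
  also have "\<dots> = set p \<union> (\<Union> (set (map set ps)) \<union> set (butlast KP)) \<union> {last KP}"
    using set_sf[OF l] by simp
  finally show ?thesis unfolding Cons KP by auto
qed

lemma sorted_sf_keys: "length cs = length ks \<Longrightarrow> sorted_wrt (<) (sf cs ks) \<Longrightarrow> sorted_wrt (<) ks"
  by (induction cs ks rule: sf.induct) (auto simp: sorted_wrt_append set_sf)

lemma sorted_il_keys: "length cs = Suc (length ks) \<Longrightarrow> sorted_wrt (<) (il cs ks) \<Longrightarrow> sorted_wrt (<) ks"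
  by (cases cs) (auto simp: sorted_wrt_append intro: sorted_sf_keys)

fun bwf :: "nat \<Rightarrow> 'a btree \<Rightarrow> bool" where
  "bwf m (Node ks ts) = ((ts = [] \<or> length ts = Suc (length ks)) \<and>
      (\<forall>t\<in>set ts. m \<le> length (bkeys t) \<and> length (bkeys t) \<le> 2 * m \<and> bwf m t))"

lemma keyset_inorder: "bwf m t \<Longrightarrow> keyset t = set (inorder t)"
proof (induction t)
  case (Node ks ts)
  have e: "map keyset ts = map set (map inorder ts)" using Node by auto
  show ?case
  proof (cases "ts = []")
    case False
    then have "length (map inorder ts) = Suc (length ks)" using Node.prems by simp
    from set_il[OF this] show ?thesis using False e by (simp del: map_map add: Un_commute)
  qed simp
qed

lemma nkeys_inorder: "bwf m t \<Longrightarrow> nkeys t = length (inorder t)"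
proof (induction t)
  case (Node ks ts)
  have e: "map nkeys ts = map length (map inorder ts)" using Node by auto
  show ?case
  proof (cases "ts = []")
    case False
    then have "length (map inorder ts) = Suc (length ks)" using Node.prems by simp
    from length_il[OF this] show ?thesis using False e by (simp del: map_map) 
  qed simp
qed




lemma count_pos:
  fixes ks :: "'a::linorder list"
  shows "sorted_wrt (<) ks \<Longrightarrow> x \<notin> set ks \<Longrightarrow> i = length (filter (\<lambda>k. k < x) ks) \<Longrightarrow>
   (\<forall>a\<in>set (take i ks). a < x) \<and> (\<forall>b\<in>set (drop i ks). x < b)"
proof (induction ks arbitrary: i)
  case Nil then show ?case by simp
next
  case (Cons a as)
  have sa: "sorted_wrt (<) as" "\<forall>b\<in>set as. a < b" using Cons.prems(1) by auto
  have xa: "x \<notin> set as" "x \<noteq> a" using Cons.prems(2) by auto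
  show ?case
  proof (cases "a < x")
    case True
    define i' where "i' = length (filter (\<lambda>k. k < x) as)"
    have ii: "i = Suc i'" using Cons.prems(3) True unfolding i'_def by simp
    have IH: "(\<forall>a\<in>set (take i' as). a < x) \<and> (\<forall>b\<in>set (drop i' as). x < b)"
      using Cons.IH[OF sa(1) xa(1) i'_def] .
    have "take i (a # as) = a # take i' as" "drop i (a # as) = drop i' as" using ii by simp_all
    then show ?thesis using IH True by simp
  next
    case False
    then have ax: "x < a" using xa(2) by simp
    then have xb: "\<forall>b\<in>set as. x < b" using sa(2) by fastforce
    then have "filter (\<lambda>k. k < x) as = []" by (fastforce simp: filter_empty_conv)
    then have "i = 0" using Cons.prems(3) False by simp
    then show ?thesis using ax xb by simp
  qed
qed

lemma node_decomp:
  assumes "length cs = Suc (length ks)" "i < length cs"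
  shows "il cs ks = apre (take i cs) (take i ks) @ cs ! i @ sf (drop (Suc i) cs) (drop i ks)"
proof -
  have e1: "take i cs @ cs ! i # drop (Suc i) cs = cs" by (rule id_take_nth_drop[OF assms(2), symmetric])
  have "il cs ks = il (take i cs @ cs ! i # drop (Suc i) cs) (take i ks @ drop i ks)"
    by (simp only: e1 append_take_drop_id)
  also have "\<dots> = apre (take i cs) (take i ks) @ cs ! i @ sf (drop (Suc i) cs) (drop i ks)"
    using assms by (intro il_decomp) simp
  finally show ?thesis .
qed

lemma apre_last: "P \<noteq> [] \<Longrightarrow> \<exists>A'. apre P KP = A' @ [last KP]"
  by (cases P) (auto simp: apre_def)

lemma sep_bounds:
  fixes y :: "'a::linorder"
  assumes "length cs = Suc (length ks)" "i < length cs" "sorted_wrt (<) (il cs ks)"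
    and "0 < i \<longrightarrow> ks ! (i - 1) < y" "i < length ks \<longrightarrow> y < ks ! i"
  shows "(\<forall>a\<in>set (apre (take i cs) (take i ks)). a < y) \<and> (\<forall>b\<in>set (sf (drop (Suc i) cs) (drop i ks)). y < b)"
proof
  have s: "sorted_wrt (<) (apre (take i cs) (take i ks) @ cs ! i @ sf (drop (Suc i) cs) (drop i ks))"
    using assms node_decomp by metis
  show "\<forall>a\<in>set (apre (take i cs) (take i ks)). a < y"
  proof (cases "i = 0")
    case True then show ?thesis by (simp add: apre_def)
  next
    case False
    then have "take i cs \<noteq> []" using assms by (cases cs) auto
    then obtain A' where A: "apre (take i cs) (take i ks) = A' @ [last (take i ks)]" using apre_last by blast
    have "take i ks = take (i - 1) ks @ [ks ! (i - 1)]"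
      using False assms take_Suc_conv_app_nth[of "i - 1" ks] by simp
    then have "last (take i ks) = ks ! (i - 1)" by simp
    then have "sorted_wrt (<) (A' @ [ks ! (i - 1)])" using s A by (simp add: sorted_wrt_append)
    then show ?thesis using A False assms \<open>last (take i ks) = ks ! (i - 1)\<close>
      by (auto simp: sorted_wrt_append)
  qed
  show "\<forall>b\<in>set (sf (drop (Suc i) cs) (drop i ks)). y < b"
  proof (cases "i < length ks")
    case False
    then have "drop i ks = []" "drop (Suc i) cs = []" using assms by auto
    then show ?thesis by simp
  next
    case True
    then have d: "drop i ks = ks ! i # drop (Suc i) ks" by (simp add: Cons_nth_drop_Suc)
    obtain c cs' where dc: "drop (Suc i) cs = c # cs'" using True assms
      by (metis Cons_nth_drop_Suc Suc_less_eq length_Suc_conv)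
    have "sorted_wrt (<) (ks ! i # c @ sf cs' (drop (Suc i) ks))"
      using s d dc by (simp add: sorted_wrt_append)
    then have h: "\<forall>b\<in>set (c @ sf cs' (drop (Suc i) ks)). ks ! i < b" by simp
    have yk: "y < ks ! i" using True assms by simp
    have "set (sf (drop (Suc i) cs) (drop i ks)) = insert (ks ! i) (set (c @ sf cs' (drop (Suc i) ks)))"
      using d dc by simp
    then show ?thesis using h yk by (auto intro: less_trans)
  qed
qed


lemma insort_prefix: "\<forall>a\<in>set A. a < x \<Longrightarrow> insort x (A @ C) = A @ insort x (C::'a::linorder list)"
  by (induction A) auto

lemma insort_suffix: "\<forall>b\<in>set B. x < b \<Longrightarrow> insort x (C @ B) = insort x C @ (B::'a::linorder list)"
proof (induction C)
  case Nil then show ?case by (auto intro: insort_is_Cons less_imp_le)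
qed auto

lemma insort_mid: "\<forall>a\<in>set A. a < x \<Longrightarrow> \<forall>b\<in>set B. x < b \<Longrightarrow>
  insort x (A @ C @ B) = A @ insort x C @ (B::'a::linorder list)"
  by (simp add: insort_prefix insort_suffix)

lemma sorted_insort_strict: "sorted_wrt (<) xs \<Longrightarrow> x \<notin> set xs \<Longrightarrow> sorted_wrt (<) (insort x (xs::'a::linorder list))"
  by (simp add: strict_sorted_iff sorted_insort distinct_insort)

definition ok_up :: "nat \<Rightarrow> nat \<Rightarrow> 'a list \<Rightarrow> nat \<Rightarrow> 'a up \<Rightarrow> bool" where
  "ok_up m d N n0 r = (case r of
      Ok t' \<Rightarrow> bwf m t' \<and> balanced t' d \<and> inorder t' = N \<and> n0 \<le> length (bkeys t') \<and> length (bkeys t') \<le> 2 * m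
    | Split l k r \<Rightarrow> bwf m l \<and> bwf m r \<and> balanced l d \<and> balanced r d \<and> inorder l @ k # inorder r = N
        \<and> length (bkeys l) = m \<and> length (bkeys r) = m)"

lemma split_node_leaf:
  assumes "1 \<le> m" "length ks \<le> 2 * m + 1" "n0 \<le> length ks"
  shows "ok_up m 0 ks n0 (split_node m ks [])"
proof (cases "length ks = 2 * m + 1")
  case True
  then have "take m ks @ ks ! m # drop (Suc m) ks = ks" using id_take_nth_drop[of m ks] by simp
  then show ?thesis using True by (simp add: ok_up_def split_node_def)
next
  case False
  then show ?thesis using assms by (simp add: ok_up_def split_node_def)
qed

lemma split_inorder:
  assumes "length ks = 2 * m + 1" "length ts = 2 * m + 2"
  shows "inorder (Node (take m ks) (take (m + 1) ts)) @ ks ! m # inorder (Node (drop (m + 1) ks) (drop (m + 1) ts))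
       = inorder (Node ks ts)"
proof -
  define cs where "cs = map inorder ts"
  have lc: "length cs = Suc (length ks)" using assms cs_def by simp
  have m: "m < length cs" using lc assms by simp
  have full: "il cs ks = apre (take m cs) (take m ks) @ cs ! m @ sf (drop (Suc m) cs) (drop m ks)"
    using node_decomp[OF lc m] .
  have tc: "take (Suc m) cs = take m cs @ [cs ! m]" using m by (simp add: take_Suc_conv_app_nth)
  have left: "il (take (Suc m) cs) (take m ks) = apre (take m cs) (take m ks) @ cs ! m"
    using il_decomp[of "take m cs" "take m ks" "cs ! m" "[]" "[]"] m lc tc by simp
  have dk: "drop m ks = ks ! m # drop (Suc m) ks" using assms by (simp add: Cons_nth_drop_Suc)
  obtain c' cs'' where dc: "drop (Suc m) cs = c' # cs''"
    using lc assms by (cases "drop (Suc m) cs") auto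
  have right: "il (drop (Suc m) cs) (drop (Suc m) ks) = c' @ sf cs'' (drop (Suc m) ks)" using dc by simp
  have "take (m + 1) ts \<noteq> []" "drop (m + 1) ts \<noteq> []" "ts \<noteq> []" using assms by auto
  then show ?thesis using full left right dk dc
    by (simp add: cs_def take_map[symmetric] drop_map[symmetric])
qed

lemma split_node_inner:
  assumes "1 \<le> m" "length ts = Suc (length ks)" "0 < d"
    and ch: "\<forall>t\<in>set ts. m \<le> length (bkeys t) \<and> length (bkeys t) \<le> 2 * m \<and> bwf m t \<and> balanced t (d - 1)"
    and "length ks \<le> 2 * m + 1" "n0 \<le> length ks"
  shows "ok_up m d (inorder (Node ks ts)) n0 (split_node m ks ts)"
proof (cases "length ks = 2 * m + 1")
  case True
  have i: "inorder (Node (take m ks) (take (m + 1) ts)) @ ks ! m # inorder (Node (drop (m + 1) ks) (drop (m + 1) ts))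
       = inorder (Node ks ts)" using split_inorder[OF True, of ts] True assms(2) by simp
  have ne: "take (m + 1) ts \<noteq> []" "drop (m + 1) ts \<noteq> []" using assms True by auto
  have s1: "set (take (m + 1) ts) \<subseteq> set ts" "set (drop (m + 1) ts) \<subseteq> set ts"
    by (auto dest: in_set_takeD in_set_dropD)
  have b1: "balanced (Node (take m ks) (take (m + 1) ts)) d" using ne s1 ch assms
    by (auto simp: list_all_iff)
  have b2: "balanced (Node (drop (m + 1) ks) (drop (m + 1) ts)) d" using ne s1 ch assms
    by (auto simp: list_all_iff)
  have w1: "bwf m (Node (take m ks) (take (m + 1) ts))" using s1 ch assms True by auto
  have w2: "bwf m (Node (drop (m + 1) ks) (drop (m + 1) ts))" using s1 ch assms True by auto
  show ?thesis using True i b1 b2 w1 w2 by (simp add: ok_up_def split_node_def)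
next
  case False
  have "balanced (Node ks ts) d" using ch assms by (auto simp: list_all_iff)
  moreover have "bwf m (Node ks ts)" using ch assms by auto
  ultimately show ?thesis using False assms by (simp add: ok_up_def split_node_def)
qed


lemma il_update:
  assumes "length cs = Suc (length ks)" "i < length cs"
  shows "il (cs[i := v]) ks = apre (take i cs) (take i ks) @ v @ sf (drop (Suc i) cs) (drop i ks)"
proof -
  have "il (cs[i := v]) ks = apre (take i (cs[i := v])) (take i ks) @ (cs[i := v]) ! i @ sf (drop (Suc i) (cs[i := v])) (drop i ks)"
    using node_decomp[of "cs[i := v]" ks i] assms by simp
  then show ?thesis using assms by simp
qed

lemma il_split_update:
  assumes "length cs = Suc (length ks)" "i < length cs"
  shows "il (take i cs @ cl # cr # drop (Suc i) cs) (take i ks @ k # drop i ks)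
       = apre (take i cs) (take i ks) @ cl @ k # cr @ sf (drop (Suc i) cs) (drop i ks)"
  using il_decomp[of "take i cs" "take i ks" cl "cr # drop (Suc i) cs" "k # drop i ks"] assms by simp

lemma ins_inv:
  fixes t :: "'a::linorder btree"
  assumes "1 \<le> m" "bwf m t" "balanced t d" "sorted_wrt (<) (inorder t)" "x \<notin> set (inorder t)"
    "length (bkeys t) \<le> 2 * m"
  shows "ok_up m d (insort x (inorder t)) (length (bkeys t)) (ins m x t)"
  using assms
proof (induction t arbitrary: d)
  case (Node ks ts)
  show ?case
  proof (cases "ts = []")
    case True
    then have "d = 0" using Node.prems by simp
    then show ?thesis using True Node.prems split_node_leaf[of m "insort x ks" "length ks"] by (simp add: Let_def)
  next
    case False
    note ne = False
    have lt: "length ts = Suc (length ks)"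
      and ch: "\<forall>t\<in>set ts. m \<le> length (bkeys t) \<and> length (bkeys t) \<le> 2 * m \<and> bwf m t"
      using Node.prems ne by auto
    have d0: "0 < d" and chb: "\<forall>t\<in>set ts. balanced t (d - 1)" using Node.prems ne by (auto simp: list_all_iff)
    define cs where "cs = map inorder ts"
    define i where "i = length (filter (\<lambda>k. k < x) ks)"
    have lc: "length cs = Suc (length ks)" using lt cs_def by simp
    have ile: "i \<le> length ks" unfolding i_def by simp
    have its: "i < length ts" using ile lt by simp
    have ic: "i < length cs" using its cs_def by simp
    have srt: "sorted_wrt (<) (il cs ks)" and xn: "x \<notin> set (il cs ks)" using Node.prems ne cs_def by auto
    have sks: "sorted_wrt (<) ks" using sorted_il_keys[OF lc srt] .
    have xks: "x \<notin> set ks" using xn set_il[OF lc] by auto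
    have cp: "(\<forall>a\<in>set (take i ks). a < x) \<and> (\<forall>b\<in>set (drop i ks). x < b)" using count_pos[OF sks xks i_def] .
    have h1: "0 < i \<longrightarrow> ks ! (i - 1) < x"
    proof
      assume "0 < i"
      then have "ks ! (i - 1) \<in> set (take i ks)" using ile
        by (metis Suc_pred diff_less in_set_conv_nth length_take less_imp_le_nat min.absorb2 nth_take zero_less_one)
      then show "ks ! (i - 1) < x" using cp by blast
    qed
    have h2: "i < length ks \<longrightarrow> x < ks ! i"
    proof
      assume "i < length ks"
      then have "ks ! i \<in> set (drop i ks)" by (metis Cons_nth_drop_Suc list.set_intros(1))
      then show "x < ks ! i" using cp by blast
    qed
    define A where "A = apre (take i cs) (take i ks)"
    define B where "B = sf (drop (Suc i) cs) (drop i ks)"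
    have dec: "il cs ks = A @ cs ! i @ B" using node_decomp[OF lc ic] A_def B_def by simp
    have AB: "(\<forall>a\<in>set A. a < x) \<and> (\<forall>b\<in>set B. x < b)"
      using sep_bounds[OF lc ic srt h1 h2] A_def B_def by simp
    define c where "c = ts ! i"
    have cin: "c \<in> set ts" using its c_def by simp
    have cs_i: "cs ! i = inorder c" using its cs_def c_def by simp
    have sc: "sorted_wrt (<) (inorder c)" using srt dec cs_i by (simp add: sorted_wrt_append)
    have xc: "x \<notin> set (inorder c)" using xn dec cs_i by simp
    have IH: "ok_up m (d - 1) (insort x (inorder c)) (length (bkeys c)) (ins m x c)"
      using Node.IH[OF cin] Node.prems(1) ch chb cin sc xc by simp
    have N: "insort x (inorder (Node ks ts)) = A @ insort x (inorder c) @ B"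
      using dec AB insort_mid[of A x B "inorder c"] cs_i ne cs_def by simp
    have insc: "ins m x (Node ks ts) = (case ins m x c of Ok t' \<Rightarrow> Ok (Node ks (ts[i := t']))
          | Split l k r \<Rightarrow> split_node m (take i ks @ [k] @ drop i ks) (take i ts @ [l, r] @ drop (Suc i) ts))"
      using ne its c_def by (simp add: Let_def i_def[symmetric])
    show ?thesis
    proof (cases "ins m x c")
      case (Ok t')
      from IH Ok have t': "bwf m t'" "balanced t' (d - 1)" "inorder t' = insort x (inorder c)"
          "length (bkeys c) \<le> length (bkeys t')" "length (bkeys t') \<le> 2 * m"
        by (simp_all add: ok_up_def)
      have mc: "m \<le> length (bkeys c)" using ch cin by blast
      have "map inorder (ts[i := t']) = cs[i := inorder t']" using cs_def by (simp add: map_update)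
      then have io: "inorder (Node ks (ts[i := t'])) = A @ inorder t' @ B"
        using il_update[OF lc ic] ne A_def B_def by simp
      have st: "set (ts[i := t']) \<subseteq> insert t' (set ts)" by (rule set_update_subset_insert)
      have "bwf m (Node ks (ts[i := t']))" using st ch t' mc lt by auto
      moreover have "balanced (Node ks (ts[i := t'])) d" using st chb t' d0 ne by (auto simp: list_all_iff)
      ultimately show ?thesis using Ok insc io N t' Node.prems by (simp add: ok_up_def)
    next
      case (Split l k r)
      from IH Split have lr: "bwf m l" "bwf m r" "balanced l (d - 1)" "balanced r (d - 1)"
          "inorder l @ k # inorder r = insort x (inorder c)" "length (bkeys l) = m" "length (bkeys r) = m"
        by (simp_all add: ok_up_def)
      define ks2 where "ks2 = take i ks @ [k] @ drop i ks"
      define ts2 where "ts2 = take i ts @ [l, r] @ drop (Suc i) ts"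
      have lk2: "length ks2 = Suc (length ks)" using ks2_def ile by simp
      have lt2: "length ts2 = Suc (length ks2)" using ts2_def lk2 lt its by simp
      have "map inorder ts2 = take i cs @ inorder l # inorder r # drop (Suc i) cs"
        using ts2_def cs_def by (simp add: take_map drop_map)
      then have io: "inorder (Node ks2 ts2) = A @ inorder l @ k # inorder r @ B"
        using il_split_update[OF lc ic] ts2_def ks2_def A_def B_def by simp
      have io2: "inorder (Node ks2 ts2) = insort x (inorder (Node ks ts))" using io N lr(5) by simp
      have st: "set ts2 \<subseteq> set ts \<union> {l, r}" unfolding ts2_def
        by (auto dest: in_set_takeD in_set_dropD)
      have ch2: "\<forall>t\<in>set ts2. m \<le> length (bkeys t) \<and> length (bkeys t) \<le> 2 * m \<and> bwf m t \<and> balanced t (d - 1)"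
        using st ch chb lr by auto
      have "ok_up m d (inorder (Node ks2 ts2)) (length ks) (split_node m ks2 ts2)"
        using split_node_inner[OF Node.prems(1) lt2 d0 ch2] lk2 Node.prems by simp
      then show ?thesis using insc Split io2 ks2_def ts2_def by simp
    qed
  qed
qed




lemma balanced_height: "balanced t d \<Longrightarrow> height t = d"
proof (induction t arbitrary: d)
  case (Node ks ts)
  show ?case
  proof (cases "ts = []")
    case False
    then have "\<forall>t\<in>set ts. height t = d - 1" using Node by (auto simp: list_all_iff)
    then have "set (map height ts) = {d - 1}" using False by (cases ts) auto
    then show ?thesis using False Node.prems by simp
  qed (use Node.prems in simp)
qed

lemma search_ok_inv:
  fixes t :: "'a::linorder btree"
  shows "bwf m t \<Longrightarrow> sorted_wrt (<) (inorder t) \<Longrightarrow> search_ok m t"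
proof (induction t)
  case (Node ks ts)
  show ?case
  proof (cases "ts = []")
    case True then show ?thesis using Node.prems by simp
  next
    case False
    define cs where "cs = map inorder ts"
    have lt: "length ts = Suc (length ks)" using Node.prems False by simp
    have lc: "length cs = Suc (length ks)" using lt cs_def by simp
    have srt: "sorted_wrt (<) (il cs ks)" using Node.prems False cs_def by simp
    have sks: "sorted_wrt (<) ks" using sorted_il_keys[OF lc srt] .
    have child: "sorted_wrt (<) (cs ! j) \<and>
        (\<forall>k\<in>set (cs ! j). (0 < j \<longrightarrow> ks ! (j - 1) < k) \<and> (j < length ks \<longrightarrow> k < ks ! j))"
      if j: "j < length ts" for j
    proof -
      have jc: "j < length cs" using j cs_def by simp
      define A where "A = apre (take j cs) (take j ks)"
      define B where "B = sf (drop (Suc j) cs) (drop j ks)"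
      have s: "sorted_wrt (<) (A @ cs ! j @ B)" using node_decomp[OF lc jc] srt A_def B_def by simp
      have sA: "set (take j ks) \<subseteq> set A" using set_apre[of "take j cs" "take j ks"] A_def jc lc by auto
      have sB: "set (drop j ks) \<subseteq> set B" using set_sf[of "drop (Suc j) cs" "drop j ks"] B_def jc lc by auto
      have a: "0 < j \<longrightarrow> ks ! (j - 1) \<in> set A"
      proof
        assume "0 < j"
        then have "take j ks = take (j - 1) ks @ [ks ! (j - 1)]"
          using jc lc take_Suc_conv_app_nth[of "j - 1" ks] by simp
        then have "ks ! (j - 1) \<in> set (take j ks)" by simp
        then show "ks ! (j - 1) \<in> set A" using sA by blast
      qed
      have b: "j < length ks \<longrightarrow> ks ! j \<in> set B"
      proof
        assume "j < length ks"
        then have "ks ! j \<in> set (drop j ks)" by (metis Cons_nth_drop_Suc list.set_intros(1))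
        then show "ks ! j \<in> set B" using sB by blast
      qed
      show ?thesis using s a b by (auto simp: sorted_wrt_append)
    qed
    have "\<forall>i<length ts. \<forall>k\<in>keyset (ts ! i). (0 < i \<longrightarrow> ks ! (i - 1) < k) \<and> (i < length ks \<longrightarrow> k < ks ! i)"
    proof (intro allI impI ballI)
      fix i k assume i: "i < length ts" and k: "k \<in> keyset (ts ! i)"
      have "bwf m (ts ! i)" using Node.prems i by simp
      then have "k \<in> set (cs ! i)" using k keyset_inorder i cs_def by auto
      then show "(0 < i \<longrightarrow> ks ! (i - 1) < k) \<and> (i < length ks \<longrightarrow> k < ks ! i)" using child[OF i] by blast
    qed
    moreover have "list_all (\<lambda>t. m \<le> length (bkeys t) \<and> length (bkeys t) \<le> 2 * m \<and> search_ok m t) ts"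
    proof (unfold list_all_iff, intro ballI)
      fix t assume t: "t \<in> set ts"
      then obtain j where j: "j < length ts" "t = ts ! j" by (metis in_set_conv_nth)
      have "sorted_wrt (<) (inorder t)" using child[OF j(1)] j cs_def by simp
      then show "m \<le> length (bkeys t) \<and> length (bkeys t) \<le> 2 * m \<and> search_ok m t"
        using Node.IH[OF t] Node.prems t by auto
    qed
    ultimately show ?thesis using sks lt by simp
  qed
qed

definition btinv :: "nat \<Rightarrow> 'a::linorder btree \<Rightarrow> nat \<Rightarrow> bool" where
  "btinv m t d = (bwf m t \<and> balanced t d \<and> sorted_wrt (<) (inorder t) \<and> 1 \<le> length (bkeys t) \<and> length (bkeys t) \<le> 2 * m)"

lemma btinv_is_btree: "btinv m t d \<Longrightarrow> is_btree m t"
  unfolding btinv_def is_btree_def using search_ok_inv[of m t] balanced_height[of t d] by simp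

lemma binsert_inv:
  assumes "1 \<le> m" "btinv m t d" "x \<notin> set (inorder t)"
  shows "\<exists>d'. d \<le> d' \<and> btinv m (binsert m x t) d' \<and> inorder (binsert m x t) = insort x (inorder t)"
proof -
  have o: "ok_up m d (insort x (inorder t)) (length (bkeys t)) (ins m x t)"
    using ins_inv[of m t d x] assms by (simp add: btinv_def)
  have s: "sorted_wrt (<) (insort x (inorder t))" using assms sorted_insort_strict by (auto simp: btinv_def)
  show ?thesis
  proof (cases "ins m x t")
    case (Ok t')
    then show ?thesis using o s assms by (auto simp: ok_up_def btinv_def binsert_def)
  next
    case (Split l k r)
    then have b: "binsert m x t = Node [k] [l, r]" by (simp add: binsert_def)
    have "btinv m (Node [k] [l, r]) (Suc d)" using o Split s assms by (auto simp: ok_up_def btinv_def)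
    then show ?thesis using b o Split by (auto simp: ok_up_def intro!: exI[of _ "Suc d"])
  qed
qed

lemma build_append: "xs \<noteq> [] \<Longrightarrow> build m (xs @ [y]) = binsert m y (build m xs)"
  by (cases xs) (simp_all add: build_def)

lemma build_single: "build m [x] = Node [x] []"
  by (simp add: build_def)

lemma build_inv:
  fixes xs :: "'a::linorder list"
  assumes "1 \<le> m" "distinct xs" "xs \<noteq> []"
  shows "\<exists>d. btinv m (build m xs) d \<and> set (inorder (build m xs)) = set xs \<and> length (inorder (build m xs)) = length xs"
  using assms(2,3)
proof (induction xs rule: rev_induct)
  case Nil then show ?case by simp
next
  case (snoc y ys)
  show ?case
  proof (cases "ys = []")
    case True then show ?thesis using assms by (auto simp: build_single btinv_def intro!: exI[of _ 0])
  next
    case False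
    then obtain d where d: "btinv m (build m ys) d" "set (inorder (build m ys)) = set ys"
       "length (inorder (build m ys)) = length ys" using snoc by auto
    have "y \<notin> set (inorder (build m ys))" using d snoc.prems by simp
    then obtain d' where "btinv m (binsert m y (build m ys)) d'"
        "inorder (binsert m y (build m ys)) = insort y (inorder (build m ys))"
      using binsert_inv[OF assms(1) d(1)] by blast
    then show ?thesis using d build_append[OF False] by (auto simp: set_insort_key length_insort)
  qed
qed




definition mu :: "('a \<Rightarrow> 'b) \<Rightarrow> 'a up \<Rightarrow> 'b up" where
  "mu f r = (case r of Ok t \<Rightarrow> Ok (map_btree f t) | Split l k r \<Rightarrow> Split (map_btree f l) (f k) (map_btree f r))"

definition opres :: "('a::linorder \<Rightarrow> 'b::linorder) \<Rightarrow> 'a set \<Rightarrow> bool" where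
  "opres f S = (\<forall>a\<in>S. \<forall>b\<in>S. a < b \<longleftrightarrow> f a < f b)"

lemma opres_le: "opres f S \<Longrightarrow> a \<in> S \<Longrightarrow> b \<in> S \<Longrightarrow> a \<le> b \<longleftrightarrow> f a \<le> f b"
  unfolding opres_def by (meson not_le)

lemma opres_mono: "opres f S \<Longrightarrow> T \<subseteq> S \<Longrightarrow> opres f T"
  unfolding opres_def by blast

lemma insort_map: "opres f (insert x (set ks)) \<Longrightarrow> insort (f x) (map f ks) = map f (insort x ks)"
proof (induction ks)
  case (Cons a ks)
  have "opres f (insert x (set ks))" using Cons.prems by (rule opres_mono) auto
  moreover have "x \<le> a \<longleftrightarrow> f x \<le> f a" by (rule opres_le[OF Cons.prems]) auto
  ultimately show ?case using Cons.IH by simp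
qed simp

lemma split_node_map: "mu f (split_node m ks ts) = split_node m (map f ks) (map (map_btree f) ts)"
  unfolding split_node_def mu_def by (simp add: take_map drop_map)

lemma ins_map:
  "opres f (insert x (keyset t)) \<Longrightarrow> ins m (f x) (map_btree f t) = mu f (ins m x t)"
proof (induction t)
  case (Node ks ts)
  have cnt: "length (filter (\<lambda>k. k < f x) (map f ks)) = length (filter (\<lambda>k. k < x) ks)"
  proof -
    have "filter (\<lambda>k. f k < f x) ks = filter (\<lambda>k. k < x) ks"
      using Node.prems by (intro filter_cong) (auto simp: opres_def)
    then show ?thesis by (simp add: filter_map comp_def)
  qed
  define i where "i = length (filter (\<lambda>k. k < x) ks)"
  show ?case
  proof (cases "ts = []")
    case True
    have "insort (f x) (map f ks) = map f (insort x ks)"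
      by (intro insort_map opres_mono[OF Node.prems]) auto
    then show ?thesis using True by (simp add: Let_def split_node_map)
  next
    case False
    show ?thesis
    proof (cases "i < length ts")
      case False
      then show ?thesis using \<open>ts \<noteq> []\<close> cnt by (simp add: Let_def i_def mu_def)
    next
      case True
      have cin: "ts ! i \<in> set ts" using True by simp
      have "opres f (insert x (keyset (ts ! i)))" by (rule opres_mono[OF Node.prems]) (use cin in auto)
      then have IH: "ins m (f x) (map_btree f (ts ! i)) = mu f (ins m x (ts ! i))" using Node.IH[OF cin] by simp
      show ?thesis
      proof (cases "ins m x (ts ! i)")
        case (Ok t')
        then show ?thesis using IH True \<open>ts \<noteq> []\<close> cnt
          by (simp add: Let_def i_def[symmetric] mu_def map_update)
      next
        case (Split l k r)
        then show ?thesis using IH True \<open>ts \<noteq> []\<close> cnt split_node_map[of f m]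
          by (simp add: Let_def i_def[symmetric] mu_def take_map drop_map)
      qed
    qed
  qed
qed

lemma binsert_map:
  "opres f (insert x (keyset t)) \<Longrightarrow> binsert m (f x) (map_btree f t) = map_btree f (binsert m x t)"
  using ins_map[of f x t m] by (cases "ins m x t") (simp_all add: binsert_def mu_def)

lemma build_map:
  fixes xs :: "'a::linorder list"
  assumes "1 \<le> m" "distinct xs" "xs \<noteq> []" "opres f (set xs)"
  shows "build m (map f xs) = map_btree f (build m xs)"
  using assms(2-4)
proof (induction xs rule: rev_induct)
  case Nil then show ?case by simp
next
  case (snoc y ys)
  show ?case
  proof (cases "ys = []")
    case True then show ?thesis by (simp add: build_single)
  next
    case False
    have IH: "build m (map f ys) = map_btree f (build m ys)"
      using snoc False opres_mono[of f "set (ys @ [y])" "set ys"] by auto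
    obtain d where d: "btinv m (build m ys) d" "set (inorder (build m ys)) = set ys"
      using build_inv[OF assms(1), of ys] snoc.prems False by auto
    have "keyset (build m ys) = set ys" using d keyset_inorder by (auto simp: btinv_def)
    then have "opres f (insert y (keyset (build m ys)))" using snoc.prems by simp
    then show ?thesis using IH build_append[OF False] build_append[of "map f ys" m "f y"] False
      binsert_map[of f y "build m ys" m] by simp
  qed
qed

lemma shape_map: "shape (map_btree f t) = shape t"
  by (simp add: shape_def btree.map_comp comp_def)

lemma height_map: "height (map_btree f t) = height t"
proof (induction t)
  case (Node ks ts)
  then have "map height (map (map_btree f) ts) = map height ts" by simp
  then show ?case by (simp del: map_map)
qed

lemma nkeys_map: "nkeys (map_btree f t) = nkeys t"
proof (induction t)
  case (Node ks ts)
  then have "map nkeys (map (map_btree f) ts) = map nkeys ts" by simp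
  then show ?case by (simp del: map_map)
qed

lemma inner_keys_map: "inner_keys (map_btree f t) = inner_keys t"
proof (induction t)
  case (Node ks ts)
  then have "map inner_keys (map (map_btree f) ts) = map inner_keys ts" by simp
  then show ?case by (simp del: map_map)
qed

lemma kids_map: "kids (map_btree f t) = map (map_btree f) (kids t)"
  by (cases t) simp

lemma del_leaves_map: "del_leaves (map_btree f t) = map_btree f (del_leaves t)"
proof (induction t)
  case (Node ks ts)
  have "list_all (\<lambda>t. kids t = []) (map (map_btree f) ts) = list_all (\<lambda>t. kids t = []) ts"
    by (simp add: list_all_iff kids_map)
  then show ?case using Node by simp
qed




lemma node_facts:
  fixes x :: "'a::linorder"
  assumes "bwf m (Node ks ts)" "ts \<noteq> []" "sorted_wrt (<) (inorder (Node ks ts))"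
    "x \<notin> set (inorder (Node ks ts))" "i = length (filter (\<lambda>k. k < x) ks)"
  shows "\<exists>A B. i < length ts \<and> sorted_wrt (<) ks \<and> inorder (Node ks ts) = A @ inorder (ts ! i) @ B
     \<and> (\<forall>a\<in>set A. a < x) \<and> (\<forall>b\<in>set B. x < b) \<and> set (take i ks) \<subseteq> set A \<and> set (drop i ks) \<subseteq> set B
     \<and> (\<forall>j<length ts. j < i \<longrightarrow> keyset (ts ! j) \<subseteq> set A)
     \<and> (\<forall>j<length ts. i < j \<longrightarrow> keyset (ts ! j) \<subseteq> set B)"
proof -
  have lt: "length ts = Suc (length ks)" using assms by simp
  define cs where "cs = map inorder ts"
  have lc: "length cs = Suc (length ks)" using lt cs_def by simp
  have ile: "i \<le> length ks" unfolding assms(5) by simp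
  have its: "i < length ts" using ile lt by simp
  have ic: "i < length cs" using its cs_def by simp
  have srt: "sorted_wrt (<) (il cs ks)" and xn: "x \<notin> set (il cs ks)" using assms cs_def by auto
  have sks: "sorted_wrt (<) ks" using sorted_il_keys[OF lc srt] .
  have xks: "x \<notin> set ks" using xn set_il[OF lc] by auto
  have cp: "(\<forall>a\<in>set (take i ks). a < x) \<and> (\<forall>b\<in>set (drop i ks). x < b)" using count_pos[OF sks xks assms(5)] .
  have h1: "0 < i \<longrightarrow> ks ! (i - 1) < x"
  proof
    assume "0 < i"
    then have "take i ks = take (i - 1) ks @ [ks ! (i - 1)]"
      using ile take_Suc_conv_app_nth[of "i - 1" ks] by simp
    then have "ks ! (i - 1) \<in> set (take i ks)" by simp
    then show "ks ! (i - 1) < x" using cp by blast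
  qed
  have h2: "i < length ks \<longrightarrow> x < ks ! i"
  proof
    assume "i < length ks"
    then have "ks ! i \<in> set (drop i ks)" by (metis Cons_nth_drop_Suc list.set_intros(1))
    then show "x < ks ! i" using cp by blast
  qed
  define A where "A = apre (take i cs) (take i ks)"
  define B where "B = sf (drop (Suc i) cs) (drop i ks)"
  have dec: "il cs ks = A @ cs ! i @ B" using node_decomp[OF lc ic] A_def B_def by simp
  have AB: "(\<forall>a\<in>set A. a < x) \<and> (\<forall>b\<in>set B. x < b)"
    using sep_bounds[OF lc ic srt h1 h2] A_def B_def by simp
  have sA: "set A = \<Union> (set (map set (take i cs))) \<union> set (take i ks)"
    using set_apre[of "take i cs" "take i ks"] A_def ic lc by simp
  have sB: "set B = \<Union> (set (map set (drop (Suc i) cs))) \<union> set (drop i ks)"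
    using set_sf[of "drop (Suc i) cs" "drop i ks"] B_def ic lc by simp
  have kA: "keyset (ts ! j) \<subseteq> set A" if "j < length ts" "j < i" for j
  proof -
    have "bwf m (ts ! j)" using that assms(1) by simp
    then have "keyset (ts ! j) = set (cs ! j)" using that keyset_inorder cs_def by auto
    moreover have "cs ! j \<in> set (take i cs)"
      using that ic nth_mem[of j "take i cs"] by simp
    ultimately show ?thesis using sA by auto
  qed
  have kB: "keyset (ts ! j) \<subseteq> set B" if "j < length ts" "i < j" for j
  proof -
    have "bwf m (ts ! j)" using that assms(1) by simp
    then have "keyset (ts ! j) = set (cs ! j)" using that keyset_inorder cs_def by auto
    moreover have "cs ! j \<in> set (drop (Suc i) cs)"
      using that cs_def nth_mem[of "j - Suc i" "drop (Suc i) cs"] by simp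
    ultimately show ?thesis using sB by auto
  qed
  have "inorder (Node ks ts) = A @ inorder (ts ! i) @ B" using dec assms(2) its cs_def by simp
  moreover have "set (take i ks) \<subseteq> set A" "set (drop i ks) \<subseteq> set B" using sA sB by auto
  ultimately show ?thesis
    apply -
    apply (rule exI[of _ A], rule exI[of _ B], intro conjI allI impI)
    using its sks AB kA kB by simp_all
qed


definition mud :: "'a up \<Rightarrow> 'a up" where
  "mud r = (case r of Ok t \<Rightarrow> Ok (del_leaves t) | Split l k r \<Rightarrow> Split (del_leaves l) k (del_leaves r))"

lemma pos_insort:
  fixes K :: "'a::linorder"
  assumes "i \<le> length ks" "\<forall>a\<in>set (take i ks). a < K" "\<forall>b\<in>set (drop i ks). K < b"
  shows "length (filter (\<lambda>k. k < K) ks) = i \<and> insort K ks = take i ks @ K # drop i ks"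
proof -
  have f1: "filter (\<lambda>k. k < K) (take i ks) = take i ks" using assms(2) by (simp add: filter_id_conv)
  have f2: "filter (\<lambda>k. k < K) (drop i ks) = []" using assms(3) by (auto simp: filter_empty_conv)
  have "filter (\<lambda>k. k < K) ks = take i ks"
    using f1 f2 by (metis append_Nil2 append_take_drop_id filter_append)
  moreover have "insort K ks = take i ks @ K # drop i ks"
  proof -
    have e: "insort K (take i ks @ drop i ks) = take i ks @ insort K (drop i ks)"
      by (rule insort_prefix[OF assms(2)])
    have "insort K (drop i ks) = K # drop i ks" by (rule insort_is_Cons) (use assms(3) in \<open>auto intro: less_imp_le\<close>)
    then show ?thesis using e by simp
  qed
  ultimately show ?thesis using assms(1) by simp
qed

lemma dl_leaves: "\<forall>t\<in>set ts. kids t = [] \<Longrightarrow> del_leaves (Node ks ts) = Node ks []"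
  by (simp add: list_all_iff)

lemma dl_nonleaves: "ts \<noteq> [] \<Longrightarrow> \<forall>t\<in>set ts. kids t \<noteq> [] \<Longrightarrow> del_leaves (Node ks ts) = Node ks (map del_leaves ts)"
  by (cases ts) auto

lemma split_node_leaves: "\<forall>t\<in>set ts. kids t = [] \<Longrightarrow> mud (split_node m ks ts) = split_node m ks []"
  unfolding split_node_def mud_def by (auto simp: list_all_iff dest: in_set_takeD in_set_dropD)

lemma nla: "xs \<noteq> [] \<Longrightarrow> \<forall>t\<in>set xs. kids t \<noteq> [] \<Longrightarrow> \<not> list_all (\<lambda>t. kids t = []) xs"
  by (cases xs) auto

lemma split_node_nonleaves:
  assumes "\<forall>t\<in>set ts. kids t \<noteq> []" "length ts = Suc (length ks)"
  shows "mud (split_node m ks ts) = split_node m ks (map del_leaves ts)"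
proof (cases "length ks = 2 * m + 1")
  case True
  have ne: "take (m + 1) ts \<noteq> []" "drop (m + 1) ts \<noteq> []" using True assms(2) by auto
  have "\<forall>t\<in>set (take (m + 1) ts). kids t \<noteq> []" "\<forall>t\<in>set (drop (m + 1) ts). kids t \<noteq> []"
    using assms(1) by (auto dest: in_set_takeD in_set_dropD)
  then have "\<not> list_all (\<lambda>t. kids t = []) (take (m + 1) ts)" "\<not> list_all (\<lambda>t. kids t = []) (drop (m + 1) ts)"
    using nla ne by blast+
  then show ?thesis using True
    by (simp add: split_node_def mud_def take_map drop_map)
next
  case False
  have "ts \<noteq> []" using assms(2) by auto
  then show ?thesis using False assms nla by (simp add: split_node_def mud_def)
qed

lemma balanced_kids: "balanced t d \<Longrightarrow> (kids t = []) = (d = 0)"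
  by (cases t) (auto split: if_splits)

lemma keyset_dl: "keyset (del_leaves t) \<subseteq> keyset t"
  by (induction t) auto

lemma leaf_median_in: "leaf_median m x t = Some K \<Longrightarrow> K \<in> insert x (keyset t)"
proof (induction t)
  case (Node ks ts)
  show ?case
  proof (cases "ts = []")
    case True
    then have "length ks = 2 * m" "K = insort x ks ! m" using Node.prems by (auto split: if_splits)
    then have "K \<in> set (insort x ks)" by (simp add: length_insort)
    then show ?thesis by (auto simp: set_insort_key)
  next
    case False
    define i where "i = length (filter (\<lambda>k. k < x) ks)"
    have i: "i < length ts" "leaf_median m x (ts ! i) = Some K"
      using Node.prems False by (auto simp: Let_def i_def[symmetric] split: if_splits)
    then have "K \<in> insert x (keyset (ts ! i))" using Node.IH[of "ts ! i"] by simp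
    then show ?thesis using i(1) by auto
  qed
qed




lemma sim:
  fixes t :: "'a::linorder btree"
  assumes "1 \<le> m" "bwf m t" "balanced t d" "1 \<le> d" "sorted_wrt (<) (inorder t)" "x \<notin> set (inorder t)"
    "length (bkeys t) \<le> 2 * m"
  shows "(leaf_median m x t = None \<longrightarrow> (\<exists>t'. ins m x t = Ok t' \<and> del_leaves t' = del_leaves t))
       \<and> (\<forall>K. leaf_median m x t = Some K \<longrightarrow> ins m K (del_leaves t) = mud (ins m x t) \<and> K \<notin> keyset (del_leaves t))"
  using assms
proof (induction t arbitrary: d)
  case (Node ks ts)
  have ne: "ts \<noteq> []" using Node.prems(3,4) by (auto split: if_splits)
  define i where "i = length (filter (\<lambda>k. k < x) ks)"
  obtain A B where its: "i < length ts" and sks: "sorted_wrt (<) ks"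
    and dec: "inorder (Node ks ts) = A @ inorder (ts ! i) @ B"
    and AB: "\<forall>a\<in>set A. a < x" "\<forall>b\<in>set B. x < b"
    and tA: "set (take i ks) \<subseteq> set A" and dB: "set (drop i ks) \<subseteq> set B"
    and kA: "\<forall>j<length ts. j < i \<longrightarrow> keyset (ts ! j) \<subseteq> set A"
    and kB: "\<forall>j<length ts. i < j \<longrightarrow> keyset (ts ! j) \<subseteq> set B"
    using node_facts[OF Node.prems(2) ne Node.prems(5) Node.prems(6) i_def] by blast
  define c where "c = ts ! i"
  have cin: "c \<in> set ts" using its c_def by simp
  have lt: "length ts = Suc (length ks)" using Node.prems(2) ne by simp
  have ch: "\<forall>t\<in>set ts. m \<le> length (bkeys t) \<and> length (bkeys t) \<le> 2 * m \<and> bwf m t"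
    using Node.prems(2) by simp
  have chb: "\<forall>t\<in>set ts. balanced t (d - 1)" using Node.prems(3) ne by (auto simp: list_all_iff)
  have srt: "sorted_wrt (<) (A @ inorder c @ B)" using dec Node.prems(5) c_def by simp
  then have sc: "sorted_wrt (<) (inorder c)" by (simp add: sorted_wrt_append)
  have xc: "x \<notin> set (inorder c)" using dec Node.prems(6) c_def by simp
  have kc: "keyset c = set (inorder c)" using keyset_inorder ch cin by blast
  have lm: "leaf_median m x (Node ks ts) = leaf_median m x c"
    using ne its by (simp add: Let_def i_def[symmetric] c_def)
  have insc: "ins m x (Node ks ts) = (case ins m x c of Ok t' \<Rightarrow> Ok (Node ks (ts[i := t']))
          | Split l k r \<Rightarrow> split_node m (take i ks @ [k] @ drop i ks) (take i ts @ [l, r] @ drop (Suc i) ts))"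
    using ne its c_def by (simp add: Let_def i_def[symmetric])
  have oc: "ok_up m (d - 1) (insort x (inorder c)) (length (bkeys c)) (ins m x c)"
    using ins_inv[of m c "d - 1" x] Node.prems(1) ch chb cin sc xc by simp
  have Kb: "(\<forall>a\<in>set A. a < K) \<and> (\<forall>b\<in>set B. K < b)" if K: "K \<in> insert x (keyset c)" for K
  proof (cases "K = x")
    case True then show ?thesis using AB by simp
  next
    case False
    then have "K \<in> set (inorder c)" using K kc by simp
    then show ?thesis using srt by (auto simp: sorted_wrt_append)
  qed
  have Kpos: "length (filter (\<lambda>k. k < K) ks) = i \<and> insort K ks = take i ks @ K # drop i ks"
    if K: "K \<in> insert x (keyset c)" for K
    using pos_insort[of i ks K] its lt Kb[OF K] tA dB by auto
  have Knks: "K \<notin> set ks" if K: "K \<in> insert x (keyset c)" for K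
  proof
    assume "K \<in> set ks"
    then have "K \<in> set (take i ks) \<or> K \<in> set (drop i ks)" by (metis append_take_drop_id Un_iff set_append)
    then show False using Kb[OF K] tA dB by blast
  qed
  have Koth: "K \<notin> keyset (ts ! j)" if K: "K \<in> insert x (keyset c)" and j: "j < length ts" "j \<noteq> i" for K j
  proof
    assume a: "K \<in> keyset (ts ! j)"
    show False
    proof (cases "j < i")
      case True then show False using kA j a Kb[OF K] by blast
    next
      case False then have "i < j" using j by simp
      then show False using kB j a Kb[OF K] by blast
    qed
  qed
  show ?case
  proof (cases "d = 1")
    case True
    have leaves: "\<forall>t\<in>set ts. kids t = []" using chb True balanced_kids by fastforce
    have dl: "del_leaves (Node ks ts) = Node ks []" using dl_leaves[OF leaves] .
    obtain cks where cc: "c = Node cks []" using leaves cin by (cases c) auto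
    have insc2: "ins m x c = split_node m (insort x cks) []" using cc by simp
    have lmc: "leaf_median m x c = (if length cks = 2 * m then Some (insort x cks ! m) else None)"
      using cc by simp
    show ?thesis
    proof (rule conjI; intro allI impI)
      assume "leaf_median m x (Node ks ts) = None"
      then have "length cks \<noteq> 2 * m" using lm lmc by (auto split: if_splits)
      then have o: "ins m x c = Ok (Node (insort x cks) [])" using insc2 by (simp add: split_node_def length_insort)
      have "set (ts[i := Node (insort x cks) []]) \<subseteq> insert (Node (insort x cks) []) (set ts)"
        by (rule set_update_subset_insert)
      then have "\<forall>t\<in>set (ts[i := Node (insort x cks) []]). kids t = []" using leaves by auto
      then have "del_leaves (Node ks (ts[i := Node (insort x cks) []])) = Node ks []" by (rule dl_leaves)
      then show "\<exists>t'. ins m x (Node ks ts) = Ok t' \<and> del_leaves t' = del_leaves (Node ks ts)"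
        using insc o dl by simp
    next
      fix K assume lK: "leaf_median m x (Node ks ts) = Some K"
      then have lc: "length cks = 2 * m" and Kd: "K = insort x cks ! m" using lm lmc by (auto split: if_splits)
      have Kin: "K \<in> insert x (keyset c)" using leaf_median_in[of m x c K] lK lm by simp
      define L where "L = insort x cks"
      have o: "ins m x c = Split (Node (take m L) []) K (Node (drop (m + 1) L) [])"
        using insc2 lc Kd L_def by (simp add: split_node_def length_insort)
      define ts2 where "ts2 = take i ts @ [Node (take m L) [], Node (drop (m + 1) L) []] @ drop (Suc i) ts"
      have "\<forall>t\<in>set ts2. kids t = []" using leaves unfolding ts2_def by (auto dest: in_set_takeD in_set_dropD)
      then have e: "mud (split_node m (take i ks @ [K] @ drop i ks) ts2) = split_node m (take i ks @ [K] @ drop i ks) []"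
        by (rule split_node_leaves)
      have "ins m x (Node ks ts) = split_node m (take i ks @ [K] @ drop i ks) ts2" using insc o ts2_def by simp
      then have "mud (ins m x (Node ks ts)) = split_node m (take i ks @ [K] @ drop i ks) []" using e by simp
      moreover have "ins m K (del_leaves (Node ks ts)) = split_node m (take i ks @ [K] @ drop i ks) []"
        using dl Kpos[OF Kin] by simp
      moreover have "K \<notin> keyset (del_leaves (Node ks ts))" using dl Knks[OF Kin] by simp
      ultimately show "ins m K (del_leaves (Node ks ts)) = mud (ins m x (Node ks ts)) \<and> K \<notin> keyset (del_leaves (Node ks ts))"
        by simp
    qed
  next
    case False
    then have d2: "1 \<le> d - 1" using Node.prems(4) by simp
    have nonl: "\<forall>t\<in>set ts. kids t \<noteq> []" using chb d2 balanced_kids by fastforce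
    have dl: "del_leaves (Node ks ts) = Node ks (map del_leaves ts)" using dl_nonleaves[OF ne nonl] .
    have IH: "(leaf_median m x c = None \<longrightarrow> (\<exists>t'. ins m x c = Ok t' \<and> del_leaves t' = del_leaves c))
       \<and> (\<forall>K. leaf_median m x c = Some K \<longrightarrow> ins m K (del_leaves c) = mud (ins m x c) \<and> K \<notin> keyset (del_leaves c))"
      using Node.IH[OF cin, of "d - 1"] Node.prems(1) ch chb cin d2 sc xc by simp
    have upd: "del_leaves (Node ks (ts[i := c'])) = Node ks ((map del_leaves ts)[i := del_leaves c'])"
      if "kids c' \<noteq> []" for c'
    proof -
      have "set (ts[i := c']) \<subseteq> insert c' (set ts)" by (rule set_update_subset_insert)
      then have "\<forall>t\<in>set (ts[i := c']). kids t \<noteq> []" using nonl that by auto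
      moreover have "ts[i := c'] \<noteq> []" using ne by simp
      ultimately have "del_leaves (Node ks (ts[i := c'])) = Node ks (map del_leaves (ts[i := c']))"
        by (intro dl_nonleaves)
      then show ?thesis by (simp add: map_update)
    qed
    show ?thesis
    proof (rule conjI; intro allI impI)
      assume "leaf_median m x (Node ks ts) = None"
      then obtain c' where o: "ins m x c = Ok c'" "del_leaves c' = del_leaves c" using IH lm by auto
      have "balanced c' (d - 1)" using oc o by (simp add: ok_up_def)
      then have "kids c' \<noteq> []" using d2 balanced_kids by fastforce
      then have "del_leaves (Node ks (ts[i := c'])) = Node ks ((map del_leaves ts)[i := del_leaves c])"
        using upd o by simp
      also have "\<dots> = Node ks (map del_leaves ts)"
      proof -
        have "del_leaves c = map del_leaves ts ! i" using its c_def by simp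
        then show ?thesis by (metis list_update_id)
      qed
      finally show "\<exists>t'. ins m x (Node ks ts) = Ok t' \<and> del_leaves t' = del_leaves (Node ks ts)"
        using insc o dl by simp
    next
      fix K assume lK: "leaf_median m x (Node ks ts) = Some K"
      have Kin: "K \<in> insert x (keyset c)" using leaf_median_in[of m x c K] lK lm by simp
      have IHK: "ins m K (del_leaves c) = mud (ins m x c)" "K \<notin> keyset (del_leaves c)" using IH lK lm by auto
      have insd: "ins m K (del_leaves (Node ks ts)) = (case ins m K (del_leaves c) of
            Ok t' \<Rightarrow> Ok (Node ks ((map del_leaves ts)[i := t']))
          | Split l k r \<Rightarrow> split_node m (take i ks @ [k] @ drop i ks)
              (take i (map del_leaves ts) @ [l, r] @ drop (Suc i) (map del_leaves ts)))"
        using dl ne its Kpos[OF Kin] c_def by (simp add: Let_def)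
      have "ins m K (del_leaves (Node ks ts)) = mud (ins m x (Node ks ts))"
      proof (cases "ins m x c")
        case (Ok c')
        have "balanced c' (d - 1)" using oc Ok by (simp add: ok_up_def)
        then have "kids c' \<noteq> []" using d2 balanced_kids by fastforce
        then show ?thesis using insd IHK(1) Ok insc upd by (simp add: mud_def)
      next
        case (Split l k r)
        have "balanced l (d - 1)" "balanced r (d - 1)" using oc Split by (simp_all add: ok_up_def)
        then have lr: "kids l \<noteq> []" "kids r \<noteq> []" using d2 balanced_kids by fastforce+
        define ts2 where "ts2 = take i ts @ [l, r] @ drop (Suc i) ts"
        define ks2 where "ks2 = take i ks @ [k] @ drop i ks"
        have "\<forall>t\<in>set ts2. kids t \<noteq> []" using nonl lr unfolding ts2_def by (auto dest: in_set_takeD in_set_dropD)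
        moreover have "length ts2 = Suc (length ks2)" using ts2_def ks2_def its lt by simp
        ultimately have "mud (split_node m ks2 ts2) = split_node m ks2 (map del_leaves ts2)"
          by (rule split_node_nonleaves)
        moreover have "map del_leaves ts2 = take i (map del_leaves ts) @ [del_leaves l, del_leaves r] @ drop (Suc i) (map del_leaves ts)"
          using ts2_def by (simp add: take_map drop_map)
        ultimately show ?thesis using insd IHK(1) Split insc ts2_def ks2_def by (simp add: mud_def)
      qed
      moreover have "K \<notin> keyset (del_leaves (Node ks ts))"
      proof
        assume "K \<in> keyset (del_leaves (Node ks ts))"
        then have "K \<in> set ks \<or> (\<exists>t\<in>set ts. K \<in> keyset (del_leaves t))" using dl by simp
        then show False
        proof
          assume "K \<in> set ks" then show False using Knks[OF Kin] by simp
        next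
          assume "\<exists>t\<in>set ts. K \<in> keyset (del_leaves t)"
          then obtain t where t: "t \<in> set ts" "K \<in> keyset (del_leaves t)" by blast
          then obtain j where "j < length ts" "ts ! j = t" by (auto simp: in_set_conv_nth)
          then have j: "j < length ts" "K \<in> keyset (del_leaves (ts ! j))" using t by auto
          show False
          proof (cases "j = i")
            case True then show False using j IHK(2) c_def by simp
          next
            case False
            then show False using Koth[OF Kin j(1) False] j(2) keyset_dl[of "ts ! j"] by blast
          qed
        qed
      qed
      ultimately show "ins m K (del_leaves (Node ks ts)) = mud (ins m x (Node ks ts)) \<and> K \<notin> keyset (del_leaves (Node ks ts))"
        by simp
    qed
  qed
qed




lemma sim_binsert:
  fixes t :: "'a::linorder btree"
  assumes "1 \<le> m" "btinv m t d" "1 \<le> d" "x \<notin> set (inorder t)"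
  shows "(leaf_median m x t = None \<longrightarrow> del_leaves (binsert m x t) = del_leaves t)
    \<and> (\<forall>K. leaf_median m x t = Some K \<longrightarrow> del_leaves (binsert m x t) = binsert m K (del_leaves t)
          \<and> K \<notin> keyset (del_leaves t))"
proof -
  have iv: "bwf m t" "balanced t d" "sorted_wrt (<) (inorder t)" "length (bkeys t) \<le> 2 * m"
    using assms(2) by (auto simp: btinv_def)
  have S: "(leaf_median m x t = None \<longrightarrow> (\<exists>t'. ins m x t = Ok t' \<and> del_leaves t' = del_leaves t))
       \<and> (\<forall>K. leaf_median m x t = Some K \<longrightarrow> ins m K (del_leaves t) = mud (ins m x t) \<and> K \<notin> keyset (del_leaves t))"
    using sim[OF assms(1) iv(1,2) assms(3) iv(3) assms(4) iv(4)] .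
  have o: "ok_up m d (insort x (inorder t)) (length (bkeys t)) (ins m x t)"
    using ins_inv[OF assms(1) iv(1,2,3) assms(4) iv(4)] .
  show ?thesis
  proof (rule conjI; intro allI impI)
    assume "leaf_median m x t = None"
    then obtain t' where "ins m x t = Ok t'" "del_leaves t' = del_leaves t" using S by blast
    then show "del_leaves (binsert m x t) = del_leaves t" by (simp add: binsert_def)
  next
    fix K assume K: "leaf_median m x t = Some K"
    then have e: "ins m K (del_leaves t) = mud (ins m x t)" and kn: "K \<notin> keyset (del_leaves t)" using S by auto
    have "del_leaves (binsert m x t) = binsert m K (del_leaves t)"
    proof (cases "ins m x t")
      case (Ok t')
      then show ?thesis using e by (simp add: binsert_def mud_def)
    next
      case (Split l k r)
      have "balanced l d" "balanced r d" using o Split by (simp_all add: ok_up_def)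
      then have "kids l \<noteq> []" "kids r \<noteq> []" using assms(3) balanced_kids by fastforce+
      then have "del_leaves (Node [k] [l, r]) = Node [k] [del_leaves l, del_leaves r]"
        by (intro trans[OF dl_nonleaves]) auto
      then show ?thesis using e Split by (simp add: binsert_def mud_def)
    qed
    then show "del_leaves (binsert m x t) = binsert m K (del_leaves t) \<and> K \<notin> keyset (del_leaves t)"
      using kn by simp
  qed
qed

lemma leaf_step:
  fixes t :: "'a::linorder btree"
  assumes "btinv m t 0"
  shows "(leaf_median m x t = None \<longrightarrow> kids (binsert m x t) = [])
    \<and> (\<forall>K. leaf_median m x t = Some K \<longrightarrow> del_leaves (binsert m x t) = Node [K] [] \<and> kids (binsert m x t) \<noteq> [])"
proof -
  obtain ks where t: "t = Node ks []" using assms by (cases t) (auto simp: btinv_def split: if_splits)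
  have lm: "leaf_median m x t = (if length ks = 2 * m then Some (insort x ks ! m) else None)" using t by simp
  have ins: "ins m x t = split_node m (insort x ks) []" using t by simp
  show ?thesis
  proof (rule conjI; intro allI impI)
    assume "leaf_median m x t = None"
    then have "length ks \<noteq> 2 * m" using lm by (auto split: if_splits)
    then show "kids (binsert m x t) = []" using ins by (simp add: split_node_def binsert_def length_insort)
  next
    fix K assume "leaf_median m x t = Some K"
    then have "length ks = 2 * m" "K = insort x ks ! m" using lm by (auto split: if_splits)
    then have "binsert m x t = Node [K] [Node (take m (insort x ks)) [], Node (drop (m + 1) (insort x ks)) []]"
      using ins by (simp add: split_node_def binsert_def length_insort)
    then show "del_leaves (binsert m x t) = Node [K] [] \<and> kids (binsert m x t) \<noteq> []" by simp
  qed
qed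

lemma bt_step: "1 \<le> p \<Longrightarrow> bt_after m \<pi> (Suc p) = binsert m (\<pi> (Suc p)) (bt_after m \<pi> p)"
proof -
  assume p: "1 \<le> p"
  have "[1..<Suc p + 1] = [1..<p + 1] @ [Suc p]" by simp
  then have "map \<pi> [1..<Suc p + 1] = map \<pi> [1..<p + 1] @ [\<pi> (Suc p)]" by simp
  moreover have "map \<pi> [1..<p + 1] \<noteq> []" using p by simp
  ultimately show ?thesis unfolding bt_after_def using build_append by metis
qed

lemma bt_inv:
  assumes "1 \<le> m" "\<pi> permutes {1..n}" "1 \<le> p" "p \<le> n"
  shows "\<exists>d. btinv m (bt_after m \<pi> p) d \<and> set (inorder (bt_after m \<pi> p)) = \<pi> ` {1..p}"
proof -
  have "inj \<pi>" using assms(2) by (rule permutes_inj)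
  then have "distinct (map \<pi> [1..<p + 1])" by (simp add: distinct_map inj_on_def)
  moreover have "map \<pi> [1..<p + 1] \<noteq> []" using assms by simp
  ultimately obtain d where "btinv m (bt_after m \<pi> p) d" "set (inorder (bt_after m \<pi> p)) = set (map \<pi> [1..<p + 1])"
    using build_inv[OF assms(1)] unfolding bt_after_def by blast
  moreover have "set (map \<pi> [1..<p + 1]) = \<pi> ` {1..p}" by auto
  ultimately show ?thesis by auto
qed

lemma new_key:
  assumes "\<pi> permutes {1..n}" "1 \<le> p" "Suc p \<le> n"
  shows "\<pi> (Suc p) \<notin> \<pi> ` {1..p}"
proof -
  have "inj \<pi>" using assms(1) by (rule permutes_inj)
  show ?thesis
  proof
    assume "\<pi> (Suc p) \<in> \<pi> ` {1..p}"
    then obtain y where "y \<in> {1..p}" "\<pi> (Suc p) = \<pi> y" by blast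
    then have "Suc p = y" using \<open>inj \<pi>\<close> by (simp add: inj_eq)
    then show False using \<open>y \<in> {1..p}\<close> by simp
  qed
qed




definition Iof :: "nat \<Rightarrow> (nat \<Rightarrow> nat) \<Rightarrow> nat \<Rightarrow> nat list" where
  "Iof m \<pi> p = filter (\<lambda>i. leaf_median m (\<pi> i) (bt_after m \<pi> (i - 1)) \<noteq> None) [2..<p + 1]"

definition Kof :: "nat \<Rightarrow> (nat \<Rightarrow> nat) \<Rightarrow> nat \<Rightarrow> nat list" where
  "Kof m \<pi> p = map (\<lambda>i. the (leaf_median m (\<pi> i) (bt_after m \<pi> (i - 1)))) (Iof m \<pi> p)"

lemma main_ind:
  assumes "1 \<le> m" "\<pi> permutes {1..n}" "1 \<le> p" "p \<le> n"
  shows "(Iof m \<pi> p = [] \<longrightarrow> kids (bt_after m \<pi> p) = [])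
    \<and> (Iof m \<pi> p \<noteq> [] \<longrightarrow> kids (bt_after m \<pi> p) \<noteq> [] \<and> del_leaves (bt_after m \<pi> p) = build m (Kof m \<pi> p)
         \<and> distinct (Kof m \<pi> p))
    \<and> map (\<lambda>i. del_leaves (bt_after m \<pi> i)) (Iof m \<pi> p)
        = map (\<lambda>j. build m (take j (Kof m \<pi> p))) [1..<length (Iof m \<pi> p) + 1]"
  using assms(3,4)
proof (induction p rule: dec_induct)
  case base
  have "Iof m \<pi> 1 = []" by (simp add: Iof_def)
  moreover have "kids (bt_after m \<pi> 1) = []" by (simp add: bt_after_def build_def)
  ultimately show ?case by simp
next
  case (step k)
  define T where "T = bt_after m \<pi>"
  define x where "x = \<pi> (Suc k)"
  have k1: "1 \<le> k" and kn: "Suc k \<le> n" using step by auto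
  have up: "[2..<Suc k + 1] = [2..<k + 1] @ [Suc k]" using k1 by simp
  have IK: "Iof m \<pi> (Suc k) = Iof m \<pi> k @ (if leaf_median m x (T k) \<noteq> None then [Suc k] else [])"
    unfolding Iof_def using up x_def T_def by simp
  have KK: "Kof m \<pi> (Suc k) = Kof m \<pi> k @ (if leaf_median m x (T k) \<noteq> None then [the (leaf_median m x (T k))] else [])"
    unfolding Kof_def using IK x_def T_def by simp
  have IH: "(Iof m \<pi> k = [] \<longrightarrow> kids (T k) = [])
    \<and> (Iof m \<pi> k \<noteq> [] \<longrightarrow> kids (T k) \<noteq> [] \<and> del_leaves (T k) = build m (Kof m \<pi> k) \<and> distinct (Kof m \<pi> k))
    \<and> map (\<lambda>i. del_leaves (T i)) (Iof m \<pi> k) = map (\<lambda>j. build m (take j (Kof m \<pi> k))) [1..<length (Iof m \<pi> k) + 1]"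
    using step.IH kn T_def by simp
  obtain d where d: "btinv m (T k) d" "set (inorder (T k)) = \<pi> ` {1..k}"
    using bt_inv[OF assms(1,2) k1] kn T_def by auto
  have xn: "x \<notin> set (inorder (T k))" using new_key[OF assms(2) k1 kn] d x_def by simp
  have TS: "T (Suc k) = binsert m x (T k)" using bt_step[OF k1] T_def x_def by simp
  obtain d' where d': "d \<le> d'" "btinv m (T (Suc k)) d'" using binsert_inv[OF assms(1) d(1) xn] TS by auto
  have lenIK: "length (Kof m \<pi> k) = length (Iof m \<pi> k)" by (simp add: Kof_def)
  show ?case
  proof (cases "leaf_median m x (T k)")
    case None
    then have I2: "Iof m \<pi> (Suc k) = Iof m \<pi> k" "Kof m \<pi> (Suc k) = Kof m \<pi> k" using IK KK by simp_all
    show ?thesis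
    proof (cases "Iof m \<pi> k = []")
      case True
      then have "kids (T k) = []" using IH by simp
      then have "d = 0" using d(1) balanced_kids by (fastforce simp: btinv_def)
      then have "kids (T (Suc k)) = []" using leaf_step[of m "T k" x] d(1) None TS by simp
      then show ?thesis using I2 True IH T_def by simp
    next
      case False
      then have kT: "kids (T k) \<noteq> []" "del_leaves (T k) = build m (Kof m \<pi> k)" "distinct (Kof m \<pi> k)"
        using IH by simp_all
      then have "d \<noteq> 0" using d(1) balanced_kids by (fastforce simp: btinv_def)
      then have dl: "del_leaves (T (Suc k)) = del_leaves (T k)"
        using sim_binsert[OF assms(1) d(1) _ xn] None TS by simp
      have "d' \<noteq> 0" using d' \<open>d \<noteq> 0\<close> by simp
      then have "kids (T (Suc k)) \<noteq> []" using d'(2) balanced_kids by (fastforce simp: btinv_def)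
      then show ?thesis using I2 False IH T_def kT dl by simp
    qed
  next
    case (Some K)
    then have I2: "Iof m \<pi> (Suc k) = Iof m \<pi> k @ [Suc k]" "Kof m \<pi> (Suc k) = Kof m \<pi> k @ [K]"
      using IK KK by simp_all
    show ?thesis
    proof (cases "Iof m \<pi> k = []")
      case True
      then have "kids (T k) = []" using IH by simp
      then have "d = 0" using d(1) balanced_kids by (fastforce simp: btinv_def)
      then have st: "del_leaves (T (Suc k)) = Node [K] []" "kids (T (Suc k)) \<noteq> []"
        using leaf_step[of m "T k" x] d(1) Some TS by simp_all
      have K1: "Kof m \<pi> k = []" using True by (simp add: Kof_def)
      show ?thesis using I2 True K1 st T_def by (simp add: build_single)
    next
      case False
      then have kT: "kids (T k) \<noteq> []" "del_leaves (T k) = build m (Kof m \<pi> k)" "distinct (Kof m \<pi> k)"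
        using IH by simp_all
      then have "d \<noteq> 0" using d(1) balanced_kids by (fastforce simp: btinv_def)
      then have sb: "del_leaves (T (Suc k)) = binsert m K (del_leaves (T k))" "K \<notin> keyset (del_leaves (T k))"
        using sim_binsert[OF assms(1) d(1) _ xn] Some TS by simp_all
      have Kne: "Kof m \<pi> k \<noteq> []" using False lenIK by auto
      have dl: "del_leaves (T (Suc k)) = build m (Kof m \<pi> k @ [K])"
        using sb(1) kT(2) build_append[OF Kne] by simp
      obtain e where "btinv m (build m (Kof m \<pi> k)) e" "set (inorder (build m (Kof m \<pi> k))) = set (Kof m \<pi> k)"
        using build_inv[OF assms(1) kT(3) Kne] by blast
      then have "keyset (build m (Kof m \<pi> k)) = set (Kof m \<pi> k)" using keyset_inorder by (auto simp: btinv_def)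
      then have dK: "distinct (Kof m \<pi> k @ [K])" using sb(2) kT by simp
      have "d' \<noteq> 0" using d' \<open>d \<noteq> 0\<close> by simp
      then have kS: "kids (T (Suc k)) \<noteq> []" using d'(2) balanced_kids by (fastforce simp: btinv_def)
      define L where "L = length (Iof m \<pi> k)"
      have r: "[1..<length (Iof m \<pi> (Suc k)) + 1] = [1..<L + 1] @ [L + 1]" using I2 L_def by simp
      have "map (\<lambda>j. build m (take j (Kof m \<pi> k @ [K]))) [1..<L + 1] = map (\<lambda>j. build m (take j (Kof m \<pi> k))) [1..<L + 1]"
        using lenIK L_def by (intro map_cong) auto
      moreover have "take (L + 1) (Kof m \<pi> k @ [K]) = Kof m \<pi> k @ [K]" using lenIK L_def by simp
      ultimately have "map (\<lambda>j. build m (take j (Kof m \<pi> (Suc k)))) [1..<length (Iof m \<pi> (Suc k)) + 1]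
          = map (\<lambda>i. del_leaves (T i)) (Iof m \<pi> k) @ [build m (Kof m \<pi> k @ [K])]"
        using r I2 IH L_def by simp
      then show ?thesis using I2 dl dK kS T_def by simp
    qed
  qed
qed




lemma nkeys_dl: "balanced t d \<Longrightarrow> 1 \<le> d \<Longrightarrow> nkeys (del_leaves t) = inner_keys t"
proof (induction t arbitrary: d)
  case (Node ks ts)
  have ne: "ts \<noteq> []" using Node.prems by (auto split: if_splits)
  have chb: "\<forall>t\<in>set ts. balanced t (d - 1)" using Node.prems ne by (auto simp: list_all_iff)
  show ?case
  proof (cases "d = 1")
    case True
    then have lv: "\<forall>t\<in>set ts. kids t = []" using chb balanced_kids by fastforce
    then have "\<forall>t\<in>set ts. inner_keys t = 0" by (metis btree.collapse inner_keys.simps)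
    then have "sum_list (map inner_keys ts) = 0" by (simp add: sum_list_eq_0_iff)
    then show ?thesis using dl_leaves[OF lv] ne by simp
  next
    case False
    then have d2: "1 \<le> d - 1" using Node.prems by simp
    then have nl: "\<forall>t\<in>set ts. kids t \<noteq> []" using chb balanced_kids by fastforce
    have "\<forall>t\<in>set ts. nkeys (del_leaves t) = inner_keys t"
    proof
      fix t assume "t \<in> set ts"
      then show "nkeys (del_leaves t) = inner_keys t" using Node.IH[of t "d - 1"] chb d2 by simp
    qed
    then have "map nkeys (map del_leaves ts) = map inner_keys ts" by simp
    then show ?thesis using dl_nonleaves[OF ne nl] ne by (simp del: map_map)
  qed
qed

lemma height_shape: "height (shape t) = height t"
  by (simp add: shape_def height_map)

lemma opres_std:
  fixes ks :: "nat list"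
  shows "opres (\<lambda>k. card {k' \<in> set ks. k' \<le> k}) (set ks)"
  unfolding opres_def
proof (intro ballI iffI)
  fix a b assume ab: "a \<in> set ks" "b \<in> set ks"
  {
    assume "a < b"
    then have "b \<in> {k' \<in> set ks. k' \<le> b}" "b \<notin> {k' \<in> set ks. k' \<le> a}" using ab by auto
    moreover have "{k' \<in> set ks. k' \<le> a} \<subseteq> {k' \<in> set ks. k' \<le> b}" using \<open>a < b\<close> by auto
    ultimately have "{k' \<in> set ks. k' \<le> a} \<subset> {k' \<in> set ks. k' \<le> b}" by blast
    then show "card {k' \<in> set ks. k' \<le> a} < card {k' \<in> set ks. k' \<le> b}" by (intro psubset_card_mono) auto
  next
    assume c: "card {k' \<in> set ks. k' \<le> a} < card {k' \<in> set ks. k' \<le> b}"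
    show "a < b"
    proof (rule ccontr)
      assume "\<not> a < b"
      then have "{k' \<in> set ks. k' \<le> b} \<subseteq> {k' \<in> set ks. k' \<le> a}" by auto
      then have "card {k' \<in> set ks. k' \<le> b} \<le> card {k' \<in> set ks. k' \<le> a}" by (intro card_mono) auto
      then show False using c by simp
    qed
  }
qed


theorem mainTheorem5:
  fixes m n :: nat and \<pi> :: "nat \<Rightarrow> nat" and T :: "nat btree"
  assumes "1 \<le> m"
    and "\<pi> permutes {1..n}"
    and "is_btree m T" and "nkeys T = n" and "1 \<le> height T"
    and "shape (bt_after m \<pi> n) = shape T"
  defines "n1 \<equiv> inner_keys T"
    and "I \<equiv> filter (\<lambda>i. leaf_median m (\<pi> i) (bt_after m \<pi> (i - 1)) \<noteq> None) [2..<n + 1]"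
  shows "is_history m (map (\<lambda>i. shape (del_leaves (bt_after m \<pi> i))) I) (shape (del_leaves T))
       \<and> map (\<lambda>i. shape (del_leaves (bt_after m \<pi> i))) I
           = map (\<lambda>j. shape (build m (take j (std_perm
                (map (\<lambda>i. the (leaf_median m (\<pi> i) (bt_after m \<pi> (i - 1)))) I))))) [1..<n1 + 1]"
proof -
  define Tn where "Tn = bt_after m \<pi> n"
  define Kl where "Kl = map (\<lambda>i. the (leaf_median m (\<pi> i) (bt_after m \<pi> (i - 1)))) I"
  have II: "I = Iof m \<pi> n" unfolding I_def Iof_def by simp
  have KK: "Kl = Kof m \<pi> n" unfolding Kl_def Kof_def II by simp
  have hTn: "1 \<le> height Tn" using assms(5,6) height_shape Tn_def by metis
  have n1: "1 \<le> n"
  proof (rule ccontr)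
    assume "\<not> 1 \<le> n"
    then have "n = 0" by simp
    then have "Tn = Node [hd []] []" unfolding Tn_def bt_after_def build_def by simp
    then show False using hTn by simp
  qed
  have MI: "(Iof m \<pi> n = [] \<longrightarrow> kids Tn = [])
    \<and> (Iof m \<pi> n \<noteq> [] \<longrightarrow> kids Tn \<noteq> [] \<and> del_leaves Tn = build m (Kof m \<pi> n) \<and> distinct (Kof m \<pi> n))
    \<and> map (\<lambda>i. del_leaves (bt_after m \<pi> i)) (Iof m \<pi> n)
        = map (\<lambda>j. build m (take j (Kof m \<pi> n))) [1..<length (Iof m \<pi> n) + 1]"
    using main_ind[OF assms(1,2) n1 order_refl] Tn_def by simp
  have Ine: "I \<noteq> []"
  proof
    assume "I = []"
    then have "kids Tn = []" using MI II by simp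
    then have "height Tn = 0" by (cases Tn) simp
    then show False using hTn by simp
  qed
  have dlT: "del_leaves Tn = build m Kl" and dK: "distinct Kl" and kT: "kids Tn \<noteq> []"
    using MI Ine II KK by simp_all
  have mapeq: "map (\<lambda>i. del_leaves (bt_after m \<pi> i)) I = map (\<lambda>j. build m (take j Kl)) [1..<length I + 1]"
    using MI II KK by simp
  have lenKI: "length Kl = length I" unfolding Kl_def by simp
  have Kne: "Kl \<noteq> []" using Ine lenKI by auto
  obtain d where d: "btinv m Tn d" using bt_inv[OF assms(1,2) n1 order_refl] Tn_def by auto
  have d1: "1 \<le> d" using d kT balanced_kids by (fastforce simp: btinv_def)
  have bK: "\<exists>e. btinv m (build m xs) e \<and> set (inorder (build m xs)) = set xs \<and> length (inorder (build m xs)) = length xs"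
    if "distinct xs" "xs \<noteq> []" for xs :: "nat list"
    using build_inv[OF assms(1) that] .
  have nkb: "nkeys (build m xs) = length xs" if "distinct xs" "xs \<noteq> []" for xs :: "nat list"
    using bK[OF that] nkeys_inorder[of m "build m xs"] by (auto simp: btinv_def)
  have ksb: "keyset (build m xs) = set xs" if "distinct xs" "xs \<noteq> []" for xs :: "nat list"
    using bK[OF that] keyset_inorder[of m "build m xs"] by (auto simp: btinv_def)
  have vb: "is_btree m (build m xs)" if "distinct xs" "xs \<noteq> []" for xs :: "nat list"
    using bK[OF that] btinv_is_btree by blast
  have "n1 = inner_keys Tn"
    unfolding n1_def Tn_def using assms(6) inner_keys_map[of "\<lambda>_. ()"] by (metis shape_def)
  also have "\<dots> = nkeys (del_leaves Tn)" using nkeys_dl[of Tn d] d d1 by (simp add: btinv_def)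
  also have "\<dots> = length Kl" using dlT nkb[OF dK Kne] by simp
  finally have n1K: "n1 = length Kl" .
  have shT: "shape (del_leaves T) = shape (del_leaves Tn)"
    using assms(6) Tn_def del_leaves_map[of "\<lambda>_. ()"] by (metis shape_def)
  define g where "g = (\<lambda>k. card {k' \<in> set Kl. k' \<le> k})"
  have sp: "std_perm Kl = map g Kl" unfolding std_perm_def g_def by simp
  have og: "opres g (set Kl)" unfolding g_def by (rule opres_std)
  have shj: "shape (build m (take j Kl)) = shape (build m (take j (std_perm Kl)))" if "1 \<le> j" for j
  proof -
    have "take j (std_perm Kl) = map g (take j Kl)" using sp by (simp add: take_map)
    moreover have "build m (map g (take j Kl)) = map_btree g (build m (take j Kl))"
      using build_map[OF assms(1), of "take j Kl" g] dK Kne that og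
      by (auto intro: opres_mono dest: in_set_takeD)
    ultimately show ?thesis by (simp add: shape_map)
  qed
  define Ts where "Ts = map (\<lambda>i. shape (del_leaves (bt_after m \<pi> i))) I"
  have "Ts = map shape (map (\<lambda>i. del_leaves (bt_after m \<pi> i)) I)" unfolding Ts_def by simp
  also have "\<dots> = map shape (map (\<lambda>j. build m (take j Kl)) [1..<length I + 1])" using mapeq by (simp only:)
  also have "\<dots> = map (\<lambda>j. shape (build m (take j Kl))) [1..<n1 + 1]" using n1K lenKI by (simp del: upt_Suc)
  finally have TsK: "Ts = map (\<lambda>j. shape (build m (take j Kl))) [1..<n1 + 1]" .
  have conj2: "Ts = map (\<lambda>j. shape (build m (take j (std_perm Kl)))) [1..<n1 + 1]"
    unfolding TsK using shj by (intro map_cong) auto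
  have tk: "distinct (take j Kl) \<and> take j Kl \<noteq> []" if "1 \<le> j" for j
    using dK Kne that by simp
  have lenTs: "length Ts = n1" using TsK by simp
  have Tsnth: "Ts ! i = shape (build m (take (Suc i) Kl))" if "i < n1" for i
    using TsK that by (simp del: upt_Suc)
  have hist: "is_history m Ts (shape (del_leaves T))"
    unfolding is_history_def
  proof (intro conjI)
    show "length Ts = nkeys (shape (del_leaves T))"
      using lenTs shT dlT nkb[OF dK Kne] n1K by (simp add: shape_def nkeys_map)
    show "Ts \<noteq> []" using lenTs n1K Kne by auto
    have tne: "Ts \<noteq> []" using lenTs n1K Kne by auto
    have "last Ts = Ts ! (n1 - 1)" using tne lenTs by (simp add: last_conv_nth)
    also have "\<dots> = shape (build m Kl)" using Tsnth[of "n1 - 1"] n1K Kne by simp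
    finally show "last Ts = shape (del_leaves T)" using shT dlT by simp
    show "\<forall>A\<in>set Ts. \<exists>S :: nat btree. is_btree m S \<and> shape S = A"
    proof
      fix A assume "A \<in> set Ts"
      then obtain j where "1 \<le> j" "A = shape (build m (take j Kl))" using TsK by (auto simp del: upt_Suc)
      then show "\<exists>S :: nat btree. is_btree m S \<and> shape S = A" using vb tk by blast
    qed
    have "hd Ts = Ts ! 0" using tne by (simp add: hd_conv_nth)
    also have "\<dots> = shape (build m [hd Kl])" using Tsnth[of 0] n1K Kne by (simp add: take_Suc)
    finally show "nkeys (hd Ts) = 1" by (simp add: build_single shape_def)
    show "\<forall>i. Suc i < length Ts \<longrightarrow> one_insertion m (Ts ! i) (Ts ! Suc i)"
    proof (intro allI impI)
      fix i assume i: "Suc i < length Ts"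
      define S where "S = build m (take (Suc i) Kl)"
      define x where "x = Kl ! Suc i"
      have ik: "Suc i < length Kl" using i lenTs n1K by simp
      have "take (Suc (Suc i)) Kl = take (Suc i) Kl @ [x]" using ik x_def by (simp add: take_Suc_conv_app_nth)
      then have bS: "build m (take (Suc (Suc i)) Kl) = binsert m x S"
        using build_append[of "take (Suc i) Kl" m x] S_def Kne by simp
      have "distinct (take (Suc (Suc i)) Kl)" using dK by simp
      then have xn: "x \<notin> set (take (Suc i) Kl)" using \<open>take (Suc (Suc i)) Kl = take (Suc i) Kl @ [x]\<close> by simp
      have ks: "keyset S = set (take (Suc i) Kl)" using ksb tk[of "Suc i"] S_def by simp
      have vS: "is_btree m S" using vb tk[of "Suc i"] S_def by simp
      have "shape S = Ts ! i" using Tsnth[of i] i lenTs S_def by simp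
      moreover have "shape (binsert m x S) = Ts ! Suc i" using Tsnth[of "Suc i"] i lenTs bS by simp
      ultimately show "one_insertion m (Ts ! i) (Ts ! Suc i)"
        unfolding one_insertion_def using vS xn ks by blast
    qed
  qed
  show ?thesis using hist conj2 Ts_def Kl_def by simp
qed


end
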